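(* Let $n\ge1$, $q\ge1$, $p>1$, and suppose $q+1<p$. For each $w\in C(\mathbb{H}^n)\cap L^\infty(\mathbb{H}^n)$ with $w>0$, there is $A>0$ such that if $u_0=Aw$, then there are no positive global classical solutions of $$u_t=u^q\Delta_{\mathbb{H}}u+u^p\ (t>0,\ \eta\in\mathbb{H}^n),\qquad u(0,\eta)=u_0(\eta).$$
   Context: $\mathbb{H}^n$ is $\mathbb{R}^{2n+1}$ with points $\eta=(x,y,\tau)$, $x,y\in\mathbb{R}^n$, $\tau\in\mathbb{R}$, group law $\eta\circ\eta'=(x+x',y+y',\tau+\tau'+2(x\cdot y'-x'\cdot y))$. $X_i=\partial_{x_i}-2y_i\partial_\tau$, $Y_i=\partial_{y_i}+2x_i\partial_\tau$ ($i=1,\dots,n$), and $\Delta_{\mathbb{H}}=\sum_{i=1}^n(X_i^2+Y_i^2)$. A global classical solution is a classical solution on $[0,T]\times\mathbb{H}^n$ for every $T>0$. *)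

theory Defs
  imports "HOL-Analysis.Analysis"
begin

type_synonym 'n heis = "(real^'n) \<times> (real^'n) \<times> real"

definition heis_mult :: "'n::finite heis \<Rightarrow> 'n heis \<Rightarrow> 'n heis" where
  "heis_mult a b = (case a of (x, y, \<tau>) \<Rightarrow> case b of (x', y', \<tau>') \<Rightarrow>
     (x + x', y + y', \<tau> + \<tau>' + 2 * (x \<bullet> y' - x' \<bullet> y)))"

definition dirder :: "('n::finite heis \<Rightarrow> real) \<Rightarrow> 'n heis \<Rightarrow> 'n heis \<Rightarrow> real" where
  "dirder f \<eta> v = deriv (\<lambda>s. f (\<eta> + s *\<^sub>R v)) 0"

definition heisX :: "'n::finite \<Rightarrow> ('n heis \<Rightarrow> real) \<Rightarrow> 'n heis \<Rightarrow> real" where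
  "heisX i f \<eta> = dirder f \<eta> (axis i 1, 0, 0) - 2 * (fst (snd \<eta>) $ i) * dirder f \<eta> (0, 0, 1)"

definition heisY :: "'n::finite \<Rightarrow> ('n heis \<Rightarrow> real) \<Rightarrow> 'n heis \<Rightarrow> real" where
  "heisY i f \<eta> = dirder f \<eta> (0, axis i 1, 0) + 2 * (fst \<eta> $ i) * dirder f \<eta> (0, 0, 1)"

definition heis_lap :: "('n::finite heis \<Rightarrow> real) \<Rightarrow> 'n heis \<Rightarrow> real" where
  "heis_lap f \<eta> = (\<Sum>i\<in>UNIV. heisX i (heisX i f) \<eta> + heisY i (heisY i f) \<eta>)"

text \<open>Classical solution on [0,T] x H^n of u_t = u^q Lap_H u + u^p, u(0) = u0:
  u continuous on [0,T] x H^n, u in C^{2,1}((0,T] x H^n) (time derivative and all Euclidean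
  spatial partial derivatives up to order two exist and are jointly continuous), and the
  equation holds pointwise on (0,T] x H^n.\<close>
definition classical_solution ::
  "real \<Rightarrow> real \<Rightarrow> real \<Rightarrow> ('n::finite heis \<Rightarrow> real) \<Rightarrow> (real \<Rightarrow> 'n heis \<Rightarrow> real) \<Rightarrow> bool" where
  "classical_solution T q p u0 u \<longleftrightarrow>
     continuous_on ({0..T} \<times> UNIV) (\<lambda>(t, \<eta>). u t \<eta>) \<and>
     (\<forall>\<eta>. u 0 \<eta> = u0 \<eta>) \<and>
     (\<exists>ut D1 D2.
        (\<forall>t\<in>{0<..T}. \<forall>\<eta>. ((\<lambda>s. u s \<eta>) has_real_derivative ut t \<eta>) (at t within {0..T})) \<and>
        continuous_on ({0<..T} \<times> UNIV) (\<lambda>(t, \<eta>). ut t \<eta>) \<and>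
        (\<forall>b\<in>Basis. \<forall>t\<in>{0<..T}. \<forall>\<eta>.
            ((\<lambda>s. u t (\<eta> + s *\<^sub>R b)) has_real_derivative D1 b t \<eta>) (at 0)) \<and>
        (\<forall>b\<in>Basis. \<forall>c\<in>Basis. \<forall>t\<in>{0<..T}. \<forall>\<eta>.
            ((\<lambda>s. D1 c t (\<eta> + s *\<^sub>R b)) has_real_derivative D2 b c t \<eta>) (at 0)) \<and>
        (\<forall>b\<in>Basis. continuous_on ({0<..T} \<times> UNIV) (\<lambda>(t, \<eta>). D1 b t \<eta>)) \<and>
        (\<forall>b\<in>Basis. \<forall>c\<in>Basis. continuous_on ({0<..T} \<times> UNIV) (\<lambda>(t, \<eta>). D2 b c t \<eta>)) \<and>
        (\<forall>t\<in>{0<..T}. \<forall>\<eta>. ut t \<eta> = (u t \<eta>) powr q * heis_lap (u t) \<eta> + (u t \<eta>) powr p))"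

definition global_classical_solution ::
  "real \<Rightarrow> real \<Rightarrow> ('n::finite heis \<Rightarrow> real) \<Rightarrow> (real \<Rightarrow> 'n heis \<Rightarrow> real) \<Rightarrow> bool" where
  "global_classical_solution q p u0 u \<longleftrightarrow> (\<forall>T>0. classical_solution T q p u0 u)"

end

theory Submission
  imports Defs
begin


lemma dir2:
  fixes F :: "'a::real_normed_vector \<Rightarrow> real"
  assumes d1: "\<And>\<eta>. ((\<lambda>s. F (\<eta> + s *\<^sub>R b1)) has_real_derivative G1 \<eta>) (at 0)"
    and d2: "\<And>\<eta>. ((\<lambda>s. F (\<eta> + s *\<^sub>R b2)) has_real_derivative G2 \<eta>) (at 0)"
    and c2: "continuous_on UNIV G2"
  shows "((\<lambda>s. F (\<eta> + s *\<^sub>R (b1 + k *\<^sub>R b2))) has_real_derivative (G1 \<eta> + k * G2 \<eta>)) (at 0)"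
proof -
  define f where "f = (\<lambda>x y. F (\<eta> + x *\<^sub>R b1 + y *\<^sub>R b2))"
  have fx: "((\<lambda>x. f x 0) has_derivative (\<lambda>h. G1 \<eta> * h)) (at 0 within UNIV)"
    using d1[of \<eta>] unfolding f_def has_field_derivative_def by simp
  have fy: "((\<lambda>y. f x y) has_derivative blinfun_apply (blinfun_scaleR_left (G2 (\<eta> + x *\<^sub>R b1 + y *\<^sub>R b2)))) (at y within UNIV)" for x y
  proof -
    have "((\<lambda>s. F ((\<eta> + x *\<^sub>R b1 + y *\<^sub>R b2) + s *\<^sub>R b2)) has_real_derivative G2 (\<eta> + x *\<^sub>R b1 + y *\<^sub>R b2)) (at (y - y))"
      using d2 by simp
    then have "((\<lambda>s. F ((\<eta> + x *\<^sub>R b1 + y *\<^sub>R b2) + (s - y) *\<^sub>R b2)) has_real_derivative G2 (\<eta> + x *\<^sub>R b1 + y *\<^sub>R b2)) (at y)"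
      using DERIV_shift[where f="\<lambda>s. F ((\<eta> + x *\<^sub>R b1 + y *\<^sub>R b2) + s *\<^sub>R b2)" and x=y and z="-y"]
      by simp
    moreover have "(\<lambda>s. F ((\<eta> + x *\<^sub>R b1 + y *\<^sub>R b2) + (s - y) *\<^sub>R b2)) = (\<lambda>y. f x y)"
      unfolding f_def by (auto simp: algebra_simps)
    ultimately have "(f x has_derivative (\<lambda>h. G2 (\<eta> + x *\<^sub>R b1 + y *\<^sub>R b2) * h)) (at y)"
      unfolding has_field_derivative_def by simp
    then show ?thesis by (simp add: mult.commute)
  qed
  have cont: "continuous (at (0, 0) within UNIV \<times> UNIV) (\<lambda>(x, y). blinfun_scaleR_left (G2 (\<eta> + x *\<^sub>R b1 + y *\<^sub>R b2)))"
  proof -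
    have "continuous_on UNIV (\<lambda>z::real\<times>real. blinfun_scaleR_left (G2 (\<eta> + fst z *\<^sub>R b1 + snd z *\<^sub>R b2)))"
      by (intro continuous_intros continuous_on_compose2[OF c2]) auto
    then show ?thesis by (simp add: continuous_on_eq_continuous_within case_prod_beta')
  qed
  have D: "((\<lambda>(x, y). f x y) has_derivative (\<lambda>(tx, ty). G1 \<eta> * tx + ty *\<^sub>R G2 (\<eta> + 0 *\<^sub>R b1 + 0 *\<^sub>R b2))) (at (0, 0) within UNIV \<times> UNIV)"
    using has_derivative_partialsI[where f=f and X=UNIV and Y=UNIV and x=0 and y=0, OF fx fy cont]
    by simp
  have L: "((\<lambda>s::real. (s, k * s)) has_derivative (\<lambda>h. (h, k * h))) (at 0)"
    by (auto intro!: derivative_eq_intros)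
  have "((\<lambda>s. (\<lambda>(x, y). f x y) (s, k * s)) has_derivative (\<lambda>h. (\<lambda>(tx, ty). G1 \<eta> * tx + ty *\<^sub>R G2 \<eta>) (h, k * h))) (at 0)"
  proof -
    have "(0::real, k * 0) = (0, 0)" by simp
    then have "(((\<lambda>(x, y). f x y) \<circ> (\<lambda>s. (s, k * s))) has_derivative ((\<lambda>(tx, ty). G1 \<eta> * tx + ty *\<^sub>R G2 \<eta>) \<circ> (\<lambda>h. (h, k * h)))) (at 0)"
      using diff_chain_at[OF L, of "\<lambda>(x, y). f x y"] D by simp
    then show ?thesis by (simp add: o_def)
  qed
  moreover have "(\<lambda>s. (\<lambda>(x, y). f x y) (s, k * s)) = (\<lambda>s. F (\<eta> + s *\<^sub>R (b1 + k *\<^sub>R b2)))"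
    unfolding f_def by (auto simp: algebra_simps)
  ultimately have X: "((\<lambda>s. F (\<eta> + s *\<^sub>R (b1 + k *\<^sub>R b2))) has_derivative (\<lambda>h. G1 \<eta> * h + (k * h) *\<^sub>R G2 \<eta>)) (at 0)"
    by simp
  show ?thesis unfolding has_field_derivative_def
    by (rule has_derivative_eq_rhs[OF X]) (auto simp: fun_eq_iff algebra_simps)
qed

lemma shift0:
  fixes \<phi> :: "real \<Rightarrow> real"
  assumes "((\<lambda>r. \<phi> (r + s)) has_real_derivative l) (at 0)"
  shows "(\<phi> has_real_derivative l) (at s)"
  using DERIV_shift[of \<phi> l 0 s] assms by simp

lemma max2:
  fixes F :: "'a::real_normed_vector \<Rightarrow> real"
  assumes mx: "\<And>\<xi>. F \<xi> \<le> F \<eta>"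
    and d1: "\<And>\<xi>. ((\<lambda>s. F (\<xi> + s *\<^sub>R b1)) has_real_derivative G1 \<xi>) (at 0)"
    and d2: "\<And>\<xi>. ((\<lambda>s. F (\<xi> + s *\<^sub>R b2)) has_real_derivative G2 \<xi>) (at 0)"
    and c2: "continuous_on UNIV G2"
    and e11: "\<And>\<xi>. ((\<lambda>s. G1 (\<xi> + s *\<^sub>R b1)) has_real_derivative H11 \<xi>) (at 0)"
    and e21: "\<And>\<xi>. ((\<lambda>s. G1 (\<xi> + s *\<^sub>R b2)) has_real_derivative H21 \<xi>) (at 0)"
    and c21: "continuous_on UNIV H21"
    and e12: "\<And>\<xi>. ((\<lambda>s. G2 (\<xi> + s *\<^sub>R b1)) has_real_derivative H12 \<xi>) (at 0)"
    and e22: "\<And>\<xi>. ((\<lambda>s. G2 (\<xi> + s *\<^sub>R b2)) has_real_derivative H22 \<xi>) (at 0)"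
    and c22: "continuous_on UNIV H22"
  shows "H11 \<eta> + k * H21 \<eta> + k * (H12 \<eta> + k * H22 \<eta>) \<le> 0"
proof (rule ccontr)
  assume neg: "\<not> ?thesis"
  define e where "e = b1 + k *\<^sub>R b2"
  define \<phi> where "\<phi> = (\<lambda>s. F (\<eta> + s *\<^sub>R e))"
  define \<psi> where "\<psi> = (\<lambda>s. G1 (\<eta> + s *\<^sub>R e) + k * G2 (\<eta> + s *\<^sub>R e))"
  have \<phi>': "(\<phi> has_real_derivative \<psi> s) (at s)" for s
  proof (rule shift0)
    have "((\<lambda>r. F ((\<eta> + s *\<^sub>R e) + r *\<^sub>R (b1 + k *\<^sub>R b2))) has_real_derivative \<psi> s) (at 0)"
      unfolding \<psi>_def by (rule dir2[OF d1 d2 c2])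
    moreover have "(\<lambda>r. F ((\<eta> + s *\<^sub>R e) + r *\<^sub>R (b1 + k *\<^sub>R b2))) = (\<lambda>r. \<phi> (r + s))"
      unfolding \<phi>_def e_def by (auto simp: algebra_simps)
    ultimately show "((\<lambda>r. \<phi> (r + s)) has_real_derivative \<psi> s) (at 0)" by simp
  qed
  have \<psi>': "(\<psi> has_real_derivative (H11 \<eta> + k * H21 \<eta> + k * (H12 \<eta> + k * H22 \<eta>))) (at 0)"
  proof -
    have A: "((\<lambda>s. G1 (\<eta> + s *\<^sub>R (b1 + k *\<^sub>R b2))) has_real_derivative H11 \<eta> + k * H21 \<eta>) (at 0)"
      by (rule dir2[OF e11 e21 c21])
    have B: "((\<lambda>s. G2 (\<eta> + s *\<^sub>R (b1 + k *\<^sub>R b2))) has_real_derivative H12 \<eta> + k * H22 \<eta>) (at 0)"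
      by (rule dir2[OF e12 e22 c22])
    show ?thesis unfolding \<psi>_def e_def
      by (intro DERIV_add A DERIV_cmult B)
  qed
  have \<psi>0: "\<psi> 0 = 0"
    using DERIV_local_max[OF \<phi>'[of 0], of 1] mx unfolding \<phi>_def by simp
  have pos: "H11 \<eta> + k * H21 \<eta> + k * (H12 \<eta> + k * H22 \<eta>) > 0" using neg by simp
  obtain d where d: "d > 0" "\<And>h. h > 0 \<Longrightarrow> h < d \<Longrightarrow> \<psi> 0 < \<psi> (0 + h)"
    using DERIV_pos_inc_right[OF \<psi>' pos] by blast
  obtain z where z: "0 < z" "z < d/2" "\<phi> (d/2) - \<phi> 0 = (d/2 - 0) * \<psi> z"
    using MVT2[of 0 "d/2" \<phi> \<psi>] \<phi>' d(1) by auto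
  have "\<psi> z > 0" using d(2)[of z] z \<psi>0 by simp
  then have "(d/2 - 0) * \<psi> z > 0" using d(1) by simp
  then have "\<phi> (d/2) > \<phi> 0" using z(3) by linarith
  moreover have "\<phi> (d/2) \<le> \<phi> 0" unfolding \<phi>_def using mx by simp
  ultimately show False by simp
qed

definition Qf :: "('a \<Rightarrow> 'a \<Rightarrow> 'a \<Rightarrow> real) \<Rightarrow> 'a \<Rightarrow> 'a \<Rightarrow> real \<Rightarrow> 'a \<Rightarrow> real" where
  "Qf H b1 b2 k \<eta> = H b1 b1 \<eta> + k * H b2 b1 \<eta> + k * (H b1 b2 \<eta> + k * H b2 b2 \<eta>)"

lemma basis_x: "((axis i 1, 0, 0) :: 'n::finite heis) \<in> Basis"
proof -
  have "((axis i 1, 0, 0) :: 'n heis) \<in> (\<lambda>u. (u, 0)) ` Basis"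
    by (rule image_eqI[where x="axis i 1"]) (simp_all add: zero_prod_def)
  then show ?thesis unfolding Basis_prod_def by (rule UnI1)
qed

lemma basis_y: "((0, axis i 1, 0) :: 'n::finite heis) \<in> Basis"
proof -
  have "((axis i 1, 0) :: (real^'n) \<times> real) \<in> (\<lambda>u. (u, 0)) ` Basis"
    by (rule image_eqI[where x="axis i 1"]) simp_all
  then have "((axis i 1, 0) :: (real^'n) \<times> real) \<in> Basis" unfolding Basis_prod_def by (rule UnI1)
  then have "((0, axis i 1, 0) :: 'n heis) \<in> (\<lambda>v. (0, v)) ` Basis" by (rule imageI)
  then show ?thesis unfolding Basis_prod_def by (rule UnI2)
qed

lemma basis_t: "((0, 0, 1) :: 'n::finite heis) \<in> Basis"
proof -
  have "((0, 1) :: (real^'n) \<times> real) \<in> (\<lambda>v. (0, v)) ` Basis"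
    by (rule image_eqI[where x="1"]) simp_all
  then have "((0, 1) :: (real^'n) \<times> real) \<in> Basis" unfolding Basis_prod_def by (rule UnI2)
  then have "((0, 0, 1) :: 'n heis) \<in> (\<lambda>v. (0, v)) ` Basis" by (rule imageI)
  then show ?thesis unfolding Basis_prod_def by (rule UnI2)
qed

lemma heis_lap_eq:
  fixes f :: "'n::finite heis \<Rightarrow> real"
  assumes d1: "\<And>b \<eta>. b \<in> Basis \<Longrightarrow> ((\<lambda>s. f (\<eta> + s *\<^sub>R b)) has_real_derivative G b \<eta>) (at 0)"
    and d2: "\<And>b c \<eta>. b \<in> Basis \<Longrightarrow> c \<in> Basis \<Longrightarrow> ((\<lambda>s. G c (\<eta> + s *\<^sub>R b)) has_real_derivative H b c \<eta>) (at 0)"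
  shows "heis_lap f \<eta> = (\<Sum>i\<in>UNIV. Qf H (axis i 1, 0, 0) (0, 0, 1) (-2 * (fst (snd \<eta>) $ i)) \<eta>
             + Qf H (0, axis i 1, 0) (0, 0, 1) (2 * (fst \<eta> $ i)) \<eta>)"
proof -
  have dd: "dirder f \<eta> b = G b \<eta>" if "b \<in> Basis" for b \<eta>
    unfolding dirder_def using d1[OF that] by (rule DERIV_imp_deriv)
  have X: "heisX i (heisX i f) \<eta> = Qf H (axis i 1, 0, 0) (0, 0, 1) (-2 * (fst (snd \<eta>) $ i)) \<eta>" for i
  proof -
    define bx :: "'n heis" where "bx = (axis i 1, 0, 0)"
    define bt :: "'n heis" where "bt = (0, 0, 1)"
    have bx: "bx \<in> Basis" and bt: "bt \<in> Basis" unfolding bx_def bt_def by (rule basis_x, rule basis_t)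
    have hx: "heisX i f = (\<lambda>\<xi>. G bx \<xi> - 2 * (fst (snd \<xi>) $ i) * G bt \<xi>)"
      unfolding bx_def bt_def by (rule ext) (simp only: heisX_def dd[OF basis_x] dd[OF basis_t])
    have inv: "fst (snd (\<xi> + s *\<^sub>R b)) = fst (snd \<xi>)" if "b = bx \<or> b = bt" for \<xi> s b
      using that unfolding bx_def bt_def by (elim disjE) simp_all
    have dx: "dirder (heisX i f) \<eta> b = H b bx \<eta> - 2 * (fst (snd \<eta>) $ i) * H b bt \<eta>" if "b = bx \<or> b = bt" for b
    proof -
      have bB: "b \<in> Basis" using that bx bt by blast
      have "((\<lambda>s. G bx (\<eta> + s *\<^sub>R b) - 2 * (fst (snd (\<eta> + s *\<^sub>R b)) $ i) * G bt (\<eta> + s *\<^sub>R b))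
              has_real_derivative H b bx \<eta> - 2 * (fst (snd \<eta>) $ i) * H b bt \<eta>) (at 0)"
        unfolding inv[OF that] by (intro DERIV_diff DERIV_cmult d2 bB bx bt)
      then show ?thesis unfolding dirder_def hx by (rule DERIV_imp_deriv)
    qed
    show ?thesis
      unfolding heisX_def[of i "heisX i f"] bx_def[symmetric] bt_def[symmetric] Qf_def
      unfolding dx[OF disjI1[OF refl]] dx[OF disjI2[OF refl]] by (simp add: algebra_simps)
  qed
  have Y: "heisY i (heisY i f) \<eta> = Qf H (0, axis i 1, 0) (0, 0, 1) (2 * (fst \<eta> $ i)) \<eta>" for i
  proof -
    define bx :: "'n heis" where "bx = (0, axis i 1, 0)"
    define bt :: "'n heis" where "bt = (0, 0, 1)"
    have bx: "bx \<in> Basis" and bt: "bt \<in> Basis" unfolding bx_def bt_def by (rule basis_y, rule basis_t)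
    have hx: "heisY i f = (\<lambda>\<xi>. G bx \<xi> + 2 * (fst \<xi> $ i) * G bt \<xi>)"
      unfolding bx_def bt_def by (rule ext) (simp only: heisY_def dd[OF basis_y] dd[OF basis_t])
    have inv: "fst (\<xi> + s *\<^sub>R b) = fst \<xi>" if "b = bx \<or> b = bt" for \<xi> s b
      using that unfolding bx_def bt_def by (elim disjE) simp_all
    have dx: "dirder (heisY i f) \<eta> b = H b bx \<eta> + 2 * (fst \<eta> $ i) * H b bt \<eta>" if "b = bx \<or> b = bt" for b
    proof -
      have bB: "b \<in> Basis" using that bx bt by blast
      have "((\<lambda>s. G bx (\<eta> + s *\<^sub>R b) + 2 * (fst (\<eta> + s *\<^sub>R b) $ i) * G bt (\<eta> + s *\<^sub>R b))
              has_real_derivative H b bx \<eta> + 2 * (fst \<eta> $ i) * H b bt \<eta>) (at 0)"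
        unfolding inv[OF that] by (intro DERIV_add DERIV_cmult d2 bB bx bt)
      then show ?thesis unfolding dirder_def hx by (rule DERIV_imp_deriv)
    qed
    show ?thesis
      unfolding heisY_def[of i "heisY i f"] bx_def[symmetric] bt_def[symmetric] Qf_def
      unfolding dx[OF disjI1[OF refl]] dx[OF disjI2[OF refl]] by (simp add: algebra_simps)
  qed
  show ?thesis unfolding heis_lap_def using X Y by simp
qed



lemma inner_ineq:
  fixes \<mu> \<alpha> \<gamma> \<epsilon> \<kappa> h p q :: real
  assumes "\<mu> > 0" "\<alpha> > 0" "\<gamma> > 0" "0 < \<epsilon>" "\<epsilon> \<le> 1/2" "4 * \<alpha> * \<epsilon> \<le> \<gamma>"
    and "2 * \<alpha> * \<mu> = \<epsilon> powr (p - 1)" "0 \<le> \<kappa>" "\<kappa> < \<alpha> * \<mu>" "0 < h" "h \<le> 1" "q \<ge> 1" "p > 1"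
  shows "\<mu> * \<alpha> - \<mu> * (\<alpha> + \<gamma>) * (1 - h) + \<kappa> * h powr q - h powr p < 0"
proof -
  have hq: "h powr q \<le> h" using powr_mono'[of 1 q h] assms by simp
  have kq: "\<kappa> * h powr q \<le> \<kappa> * h" using hq assms by (simp add: mult_left_mono)
  define \<delta> where "\<delta> = \<mu> * \<alpha> + \<kappa>"
  have \<delta>: "\<delta> < \<epsilon> powr (p - 1)" using assms unfolding \<delta>_def by (simp add: algebra_simps)
  have e: "\<mu> * \<alpha> - \<mu> * (\<alpha> + \<gamma>) * (1 - h) + \<kappa> * h powr q - h powr p
      \<le> \<delta> * h - \<mu> * \<gamma> * (1 - h) - h powr p"
    using kq unfolding \<delta>_def by (simp add: algebra_simps)
  have hp: "h powr p = h * h powr (p - 1)"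
    using assms by (simp add: powr_diff powr_one)
  show ?thesis
  proof (cases "h \<ge> \<epsilon>")
    case True
    have "\<epsilon> powr (p - 1) \<le> h powr (p - 1)" using powr_mono2[of "p - 1" \<epsilon> h] True assms by simp
    then have "\<delta> < h powr (p - 1)" using \<delta> by simp
    then have "\<delta> * h < h powr p" unfolding hp using assms by (simp add: mult.commute)
    moreover have "\<mu> * \<gamma> * (1 - h) \<ge> 0" using assms by simp
    ultimately show ?thesis using e by linarith
  next
    case False
    have d0: "\<delta> \<ge> 0" using assms unfolding \<delta>_def by simp
    have "\<delta> * h \<le> \<delta> * \<epsilon>" using False d0 by (simp add: mult_left_mono)
    also have "\<dots> \<le> 2 * \<alpha> * \<mu> * \<epsilon>" using \<delta> assms by (simp add: mult_right_mono)
    also have "\<dots> \<le> \<mu> * \<gamma> / 2"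
    proof -
      have "\<mu> * (4 * \<alpha> * \<epsilon>) \<le> \<mu> * \<gamma>" using assms by (simp add: mult_left_mono)
      then show ?thesis by (simp add: algebra_simps)
    qed
    finally have a: "\<delta> * h \<le> \<mu> * \<gamma> / 2" .
    have "\<mu> * \<gamma> * (1 - h) > \<mu> * \<gamma> / 2"
    proof -
      have "1 - h > 1/2" using False assms by simp
      then have "\<mu> * \<gamma> * (1 - h) > \<mu> * \<gamma> * (1/2)" using assms by (simp add: mult_strict_left_mono)
      then show ?thesis by simp
    qed
    moreover have "h powr p > 0" using assms by simp
    ultimately show ?thesis using e a by linarith
  qed
qed

lemma scalar_ineq:
  fixes p q nn a0 \<theta> s \<alpha> \<gamma> \<epsilon> \<mu> Kc T :: real
  assumes pq: "q \<ge> 1" "q + 1 < p" "nn \<ge> 0"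
    and defs: "\<alpha> = 1 / (p - 1)" "\<gamma> = (p - q - 1) / (p - 1)" "\<epsilon> = min (1/2) ((p - q - 1) / 4)"
      "\<mu> = \<epsilon> powr (p - 1) * (p - 1) / 2" "Kc = 4 * (2 * nn + 4) / \<epsilon> powr (p - 1)"
      "a0 = (Kc + 1) powr (1 / (p - q - 1))" "T = 1 / (\<mu> * a0 powr (p - 1))"
    and th: "0 < \<theta>" "\<theta> \<le> 1" "0 \<le> s"
    and vpos: "a0 * \<theta> powr (-\<alpha>) - a0 * \<theta> powr (-\<alpha>-\<gamma>) * s > 0"
  shows "a0 * \<alpha> * \<theta> powr (-\<alpha>-1) / T - a0 * (\<alpha> + \<gamma>) * \<theta> powr (-\<alpha>-\<gamma>-1) * s / T
     + 2 * (a0 * \<theta> powr (-\<alpha>-\<gamma>)) * (2 * nn + 4) * (a0 * \<theta> powr (-\<alpha>) - a0 * \<theta> powr (-\<alpha>-\<gamma>) * s) powr q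
     - (a0 * \<theta> powr (-\<alpha>) - a0 * \<theta> powr (-\<alpha>-\<gamma>) * s) powr p < 0"
proof -
  have p1: "p - 1 > 0" and pq1: "p - q - 1 > 0" using pq by auto
  have al: "\<alpha> > 0" "\<gamma> > 0" using defs(1,2) p1 pq1 by auto
  have ep: "\<epsilon> > 0" "\<epsilon> \<le> 1/2" "\<epsilon> \<le> (p - q - 1) / 4" using defs(3) pq1 by (auto simp: min_def)
  have epp: "\<epsilon> powr (p - 1) > 0" using ep by simp
  have mu: "\<mu> > 0" unfolding defs(4) using epp p1 by simp
  have Kc: "Kc > 0" using defs(5) epp pq by simp
  have a0: "a0 > 0" using defs(6) Kc by simp
  have a0pow: "a0 powr (p - q - 1) = Kc + 1"
    using defs(6) Kc pq1 by (simp add: powr_powr)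
  define A where "A = a0 * \<theta> powr (-\<alpha>)"
  define h where "h = 1 - s * \<theta> powr (-\<gamma>)"
  have A0: "A > 0" unfolding A_def using a0 th by simp
  have tag: "\<theta> powr (-\<alpha>-\<gamma>) = \<theta> powr (-\<alpha>) * \<theta> powr (-\<gamma>)"
    by (simp add: powr_add[symmetric])
  have vv: "a0 * \<theta> powr (-\<alpha>) - a0 * \<theta> powr (-\<alpha>-\<gamma>) * s = A * h"
    unfolding A_def h_def tag by (simp add: algebra_simps)
  have h0: "h > 0" using vpos vv A0 by (simp add: zero_less_mult_iff)
  have h1: "h \<le> 1" unfolding h_def using th by simp
  have Ap: "A powr p = a0 powr p * \<theta> powr (-\<alpha>-1)"
  proof -
    have "-\<alpha> * p = -\<alpha> - 1" using defs(1) p1 by (simp add: field_simps)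
    then show ?thesis unfolding A_def using a0 th by (simp add: powr_mult powr_powr)
  qed
  have invT: "1 / T = \<mu> * a0 powr (p - 1)" using defs(7) by simp
  have aa: "a0 * a0 powr (p - 1) = a0 powr p" using a0 by (simp add: powr_diff)
  have P1: "a0 * \<alpha> * \<theta> powr (-\<alpha>-1) / T = \<mu> * \<alpha> * A powr p"
  proof -
    have "a0 * \<alpha> * \<theta> powr (-\<alpha>-1) / T = a0 * \<alpha> * \<theta> powr (-\<alpha>-1) * (1 / T)" by simp
    also have "\<dots> = a0 * \<alpha> * \<theta> powr (-\<alpha>-1) * (\<mu> * a0 powr (p - 1))" by (simp only: invT)
    also have "\<dots> = (a0 * a0 powr (p - 1)) * (\<mu> * \<alpha> * \<theta> powr (-\<alpha>-1))" by (simp only: ac_simps)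
    also have "\<dots> = \<mu> * \<alpha> * A powr p" unfolding aa Ap by (simp only: ac_simps)
    finally show ?thesis .
  qed
  have P2: "a0 * (\<alpha> + \<gamma>) * \<theta> powr (-\<alpha>-\<gamma>-1) * s / T = \<mu> * (\<alpha> + \<gamma>) * A powr p * (1 - h)"
  proof -
    have "\<theta> powr (-\<alpha>-\<gamma>-1) = \<theta> powr ((-\<alpha>-1) + (-\<gamma>))" by (simp add: algebra_simps)
    then have t1: "\<theta> powr (-\<alpha>-\<gamma>-1) = \<theta> powr (-\<alpha>-1) * \<theta> powr (-\<gamma>)" by (simp only: powr_add)
    have t2: "s * \<theta> powr (-\<gamma>) = 1 - h" unfolding h_def by simp
    have "a0 * (\<alpha> + \<gamma>) * \<theta> powr (-\<alpha>-\<gamma>-1) * s / T = a0 * (\<alpha> + \<gamma>) * \<theta> powr (-\<alpha>-\<gamma>-1) * s * (1 / T)" by simp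
    also have "\<dots> = a0 * (\<alpha> + \<gamma>) * (\<theta> powr (-\<alpha>-1) * \<theta> powr (-\<gamma>)) * s * (\<mu> * a0 powr (p - 1))" by (simp only: invT t1)
    also have "\<dots> = (a0 * a0 powr (p - 1)) * \<theta> powr (-\<alpha>-1) * \<mu> * (\<alpha> + \<gamma>) * (s * \<theta> powr (-\<gamma>))" by (simp only: ac_simps)
    also have "\<dots> = \<mu> * (\<alpha> + \<gamma>) * A powr p * (1 - h)" unfolding aa Ap t2 by (simp only: ac_simps)
    finally show ?thesis .
  qed
  have P3: "(a0 * \<theta> powr (-\<alpha>-\<gamma>)) * (A * h) powr q = A powr p * (1 / (Kc + 1)) * h powr q"
  proof -
    have e1: "(A * h) powr q = a0 powr q * \<theta> powr (-\<alpha> * q) * h powr q"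
      unfolding A_def using a0 th h0 by (simp add: powr_mult powr_powr)
    have ex: "-\<alpha>-\<gamma> + -\<alpha> * q = -\<alpha> - 1"
    proof -
      have "\<gamma> + \<alpha> * q = (p - q - 1) / (p - 1) + q / (p - 1)" unfolding defs(1,2) by simp
      also have "\<dots> = ((p - q - 1) + q) / (p - 1)" by (rule add_divide_distrib[symmetric])
      also have "\<dots> = 1" using p1 by simp
      finally have "\<gamma> + \<alpha> * q = 1" .
      then show ?thesis by simp
    qed
    have e2: "\<theta> powr (-\<alpha>-\<gamma>) * \<theta> powr (-\<alpha> * q) = \<theta> powr (-\<alpha> - 1)"
      by (simp only: powr_add[symmetric] ex)
    have e3: "a0 * a0 powr q = a0 powr p * (1 / (Kc + 1))"
    proof -
      have "a0 powr p = a0 powr (q + 1) * a0 powr (p - q - 1)" by (simp add: powr_add[symmetric])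
      then have "a0 powr p = a0 * a0 powr q * (Kc + 1)" using a0 a0pow by (simp add: powr_add)
      then show ?thesis using Kc by (simp add: field_simps)
    qed
    have "(a0 * \<theta> powr (-\<alpha>-\<gamma>)) * (A * h) powr q = (a0 * a0 powr q) * (\<theta> powr (-\<alpha>-\<gamma>) * \<theta> powr (-\<alpha> * q)) * h powr q"
      unfolding e1 by (simp add: algebra_simps)
    also have "\<dots> = A powr p * (1 / (Kc + 1)) * h powr q" unfolding e2 e3 Ap by (simp add: algebra_simps)
    finally show ?thesis .
  qed
  have P4: "(A * h) powr p = A powr p * h powr p" using A0 h0 by (simp add: powr_mult)
  define \<kappa> where "\<kappa> = 2 * (2 * nn + 4) / (Kc + 1)"
  have kap: "0 \<le> \<kappa>" "\<kappa> < \<alpha> * \<mu>"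
  proof -
    show "0 \<le> \<kappa>" unfolding \<kappa>_def using pq Kc by simp
    have am: "\<alpha> * \<mu> = \<epsilon> powr (p - 1) / 2" unfolding defs(1,4) using p1 by (simp add: field_simps)
    have "\<kappa> < 2 * (2 * nn + 4) / Kc" unfolding \<kappa>_def using Kc pq
      by (intro divide_strict_left_mono) auto
    also have "\<dots> = \<epsilon> powr (p - 1) / 2" unfolding defs(5) using epp pq by (simp add: field_simps)
    finally show "\<kappa> < \<alpha> * \<mu>" using am by simp
  qed
  have I: "\<mu> * \<alpha> - \<mu> * (\<alpha> + \<gamma>) * (1 - h) + \<kappa> * h powr q - h powr p < 0"
  proof (rule inner_ineq[OF mu al ep(1,2) _ _ kap h0 h1 pq(1)])
    have "4 * \<epsilon> / (p - 1) \<le> (p - q - 1) / (p - 1)" using ep(3) p1 by (intro divide_right_mono) auto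
    then show "4 * \<alpha> * \<epsilon> \<le> \<gamma>" unfolding defs(1,2) by simp
    show "2 * \<alpha> * \<mu> = \<epsilon> powr (p - 1)" unfolding defs(1,4) using p1 by (simp add: field_simps)
    show "p > 1" using pq by simp
  qed
  have "a0 * \<alpha> * \<theta> powr (-\<alpha>-1) / T - a0 * (\<alpha> + \<gamma>) * \<theta> powr (-\<alpha>-\<gamma>-1) * s / T
     + 2 * (a0 * \<theta> powr (-\<alpha>-\<gamma>)) * (2 * nn + 4) * (A * h) powr q - (A * h) powr p
     = A powr p * (\<mu> * \<alpha> - \<mu> * (\<alpha> + \<gamma>) * (1 - h) + \<kappa> * h powr q - h powr p)"
  proof -
    have "2 * (a0 * \<theta> powr (-\<alpha>-\<gamma>)) * (2 * nn + 4) * (A * h) powr q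
       = 2 * (2 * nn + 4) * ((a0 * \<theta> powr (-\<alpha>-\<gamma>)) * (A * h) powr q)" by (simp add: algebra_simps)
    also have "\<dots> = A powr p * (\<kappa> * h powr q)" unfolding P3 \<kappa>_def by (simp add: algebra_simps add_divide_distrib)
    finally have x: "2 * (a0 * \<theta> powr (-\<alpha>-\<gamma>)) * (2 * nn + 4) * (A * h) powr q = A powr p * (\<kappa> * h powr q)" .
    show ?thesis unfolding P1 P2 P4 x by (simp add: algebra_simps)
  qed
  moreover have "A powr p * (\<mu> * \<alpha> - \<mu> * (\<alpha> + \<gamma>) * (1 - h) + \<kappa> * h powr q - h powr p) < 0"
    using I A0 by (simp add: mult_pos_neg)
  ultimately show ?thesis unfolding vv by simp
qed



lemma sum_sq_vec: "(\<Sum>i\<in>UNIV. (x $ i)^2) = (norm (x::real^'n))^2"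
  unfolding power2_norm_eq_inner by (simp add: inner_vec_def power2_eq_square)

lemma norm_heis_sq: "(norm ((x, y, \<tau>) :: 'n::finite heis))^2 = (norm x)^2 + (norm y)^2 + \<tau>^2"
  by (simp add: norm_Pair)

lemma norm_sq_deriv:
  fixes \<xi> b :: "'a::real_inner"
  shows "((\<lambda>s. (norm (\<xi> + s *\<^sub>R b))^2) has_real_derivative 2 * (\<xi> \<bullet> b)) (at 0)"
proof -
  have e: "(\<lambda>s. (norm (\<xi> + s *\<^sub>R b))^2) = (\<lambda>s. \<xi> \<bullet> \<xi> + 2 * s * (\<xi> \<bullet> b) + s^2 * (b \<bullet> b))"
    unfolding power2_norm_eq_inner by (auto simp: inner_add inner_commute algebra_simps power2_eq_square)
  show ?thesis unfolding e by (auto intro!: derivative_eq_intros)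
qed

lemma powr_deriv_aux:
  fixes T t r :: real
  assumes "T > 0" "1 - t / T > 0"
  shows "((\<lambda>t. (1 - t / T) powr r) has_real_derivative (r * (1 - t / T) powr (r - 1) * (- 1 / T))) (at t)"
proof -
  have g: "((\<lambda>t. 1 - t / T) has_real_derivative (- 1 / T)) (at t)"
    using assms(1) by (auto intro!: derivative_eq_intros)
  show ?thesis using DERIV_chain2[OF has_real_derivative_powr[OF assms(2)] g] by simp
qed

theorem mainTheorem10:
  fixes q p :: real and w :: "'n::finite heis \<Rightarrow> real"
  assumes "q \<ge> 1" and "p > 1" and "q + 1 < p"
    and "continuous_on UNIV w" and "bounded (range w)" and "\<forall>\<eta>. w \<eta> > 0"
  shows "\<exists>A>0. \<not> (\<exists>u. global_classical_solution q p (\<lambda>\<eta>. A * w \<eta>) u \<and>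
                        (\<forall>t\<ge>0. \<forall>\<eta>. u t \<eta> > 0))"
proof -
  note hq = assms(1) and hp = assms(2) and hpq = assms(3) and wc = assms(4) and wpos = assms(6)
  define nn :: real where "nn = real CARD('n)"
  define \<alpha> where "\<alpha> = 1 / (p - 1)"
  define \<gamma> where "\<gamma> = (p - q - 1) / (p - 1)"
  define \<epsilon> where "\<epsilon> = min (1/2) ((p - q - 1) / 4)"
  define \<mu> where "\<mu> = \<epsilon> powr (p - 1) * (p - 1) / 2"
  define Kc where "Kc = 4 * (2 * nn + 4) / \<epsilon> powr (p - 1)"
  define a0 where "a0 = (Kc + 1) powr (1 / (p - q - 1))"
  define T where "T = 1 / (\<mu> * a0 powr (p - 1))"
  have p1: "p - 1 > 0" using hp by simp
  have al: "\<alpha> > 0" "\<gamma> > 0" unfolding \<alpha>_def \<gamma>_def using p1 hpq by auto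
  have epos: "\<epsilon> > 0" unfolding \<epsilon>_def using hpq by (auto simp: min_def)
  have mupos: "\<mu> > 0" unfolding \<mu>_def using epos p1 by simp
  have nn0: "nn \<ge> 0" unfolding nn_def by simp
  have Kcpos: "Kc > 0" unfolding Kc_def using epos nn0 by simp
  have a0pos: "a0 > 0" unfolding a0_def using Kcpos by simp
  have Tpos: "T > 0" unfolding T_def using mupos a0pos by simp
  obtain \<eta>m where \<eta>m: "\<eta>m \<in> cball 0 1" "\<forall>\<eta>\<in>cball 0 1. w \<eta>m \<le> w \<eta>"
  proof -
    have "\<exists>x\<in>cball (0::'n heis) 1. \<forall>y\<in>cball 0 1. w x \<le> w y"
      by (rule continuous_attains_inf) (auto intro: continuous_on_subset[OF wc])
    then show ?thesis using that by blast
  qed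
  define m where "m = w \<eta>m"
  have mpos: "m > 0" unfolding m_def using wpos by blast
  define A where "A = (a0 + 1) / m"
  have Apos: "A > 0" unfolding A_def using a0pos mpos by simp
  have Aw: "A * w \<eta> \<ge> a0 + 1" if "\<eta> \<in> cball 0 1" for \<eta>
  proof -
    have "A * w \<eta> \<ge> A * m" using \<eta>m(2) that Apos unfolding m_def by (simp add: mult_left_mono)
    also have "A * m = a0 + 1" unfolding A_def using mpos by simp
    finally show ?thesis .
  qed
  show ?thesis
  proof (intro exI[of _ A] conjI Apos notI)
    assume "\<exists>u. global_classical_solution q p (\<lambda>\<eta>. A * w \<eta>) u \<and> (\<forall>t\<ge>0. \<forall>\<eta>. u t \<eta> > 0)"
    then obtain u where gs: "global_classical_solution q p (\<lambda>\<eta>. A * w \<eta>) u"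
      and upos0: "\<forall>t\<ge>0. \<forall>\<eta>. u t \<eta> > 0" by blast
    have upos: "u t \<eta> > 0" if "t \<ge> 0" for t \<eta> using upos0 that by blast
    have cs: "classical_solution T q p (\<lambda>\<eta>. A * w \<eta>) u"
      using gs Tpos unfolding global_classical_solution_def by blast
    have ucont: "continuous_on ({0..T} \<times> UNIV) (\<lambda>(t, \<eta>). u t \<eta>)" and uinit: "\<forall>\<eta>. u 0 \<eta> = A * w \<eta>"
      using cs unfolding classical_solution_def by auto
    obtain ut D1 D2 where
      hut: "\<forall>t\<in>{0<..T}. \<forall>\<eta>. ((\<lambda>s. u s \<eta>) has_real_derivative ut t \<eta>) (at t within {0..T})" and
      hD1: "\<forall>b\<in>Basis. \<forall>t\<in>{0<..T}. \<forall>\<eta>. ((\<lambda>s. u t (\<eta> + s *\<^sub>R b)) has_real_derivative D1 b t \<eta>) (at 0)" and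
      hD2: "\<forall>b\<in>Basis. \<forall>c\<in>Basis. \<forall>t\<in>{0<..T}. \<forall>\<eta>.
            ((\<lambda>s. D1 c t (\<eta> + s *\<^sub>R b)) has_real_derivative D2 b c t \<eta>) (at 0)" and
      cD1: "\<forall>b\<in>Basis. continuous_on ({0<..T} \<times> UNIV) (\<lambda>(t, \<eta>). D1 b t \<eta>)" and
      cD2: "\<forall>b\<in>Basis. \<forall>c\<in>Basis. continuous_on ({0<..T} \<times> UNIV) (\<lambda>(t, \<eta>). D2 b c t \<eta>)" and
      heq: "\<forall>t\<in>{0<..T}. \<forall>\<eta>. ut t \<eta> = (u t \<eta>) powr q * heis_lap (u t) \<eta> + (u t \<eta>) powr p"
      using cs unfolding classical_solution_def by blast
    have hD1': "((\<lambda>s. u t (\<eta> + s *\<^sub>R b)) has_real_derivative D1 b t \<eta>) (at 0)"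
      if "b \<in> Basis" "t \<in> {0<..T}" for b t \<eta> using hD1 that by blast
    have hD2': "((\<lambda>s. D1 c t (\<eta> + s *\<^sub>R b)) has_real_derivative D2 b c t \<eta>) (at 0)"
      if "b \<in> Basis" "c \<in> Basis" "t \<in> {0<..T}" for b c t \<eta> using hD2 that by blast
    have hut': "((\<lambda>s. u s \<eta>) has_real_derivative ut t \<eta>) (at t within {0..T})"
      if "t \<in> {0<..T}" for t \<eta> using hut that by blast
    have heq': "ut t \<eta> = (u t \<eta>) powr q * heis_lap (u t) \<eta> + (u t \<eta>) powr p"
      if "t \<in> {0<..T}" for t \<eta> using heq that by blast
    define \<theta> where "\<theta> = (\<lambda>t::real. 1 - t / T)"
    define aa where "aa = (\<lambda>t. a0 * \<theta> t powr (-\<alpha>))"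
    define bb where "bb = (\<lambda>t. a0 * \<theta> t powr (-\<alpha>-\<gamma>))"
    define v where "v = (\<lambda>t (\<eta>::'n heis). aa t - bb t * (norm \<eta>)^2)"
    have uc0: "continuous_on {0..T} (\<lambda>t. u t 0)"
    proof -
      have "continuous_on {0..T} (\<lambda>t. (\<lambda>(t, \<eta>). u t \<eta>) (t, 0))"
        by (rule continuous_on_compose2[OF ucont]) (auto intro!: continuous_intros)
      then show ?thesis by simp
    qed
    obtain M where M: "\<forall>t\<in>{0..T}. u t 0 \<le> M"
    proof -
      have "bounded ((\<lambda>t. u t 0) ` {0..T})"
        by (rule compact_imp_bounded[OF compact_continuous_image[OF uc0 compact_Icc]])
      then obtain B where "\<forall>x\<in>(\<lambda>t. u t 0) ` {0..T}. norm x \<le> B" unfolding bounded_iff by blast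
      then have "\<forall>t\<in>{0..T}. u t 0 \<le> B" by (auto simp: abs_le_iff)
      then show ?thesis by (rule that)
    qed
    define \<theta>1 where "\<theta>1 = min (1/2) ((a0 / (\<bar>M\<bar> + a0)) powr (p - 1))"
    have \<theta>1: "0 < \<theta>1" "\<theta>1 \<le> 1/2" unfolding \<theta>1_def using a0pos by auto
    define T1 where "T1 = T * (1 - \<theta>1)"
    have T1: "0 < T1" "T1 < T" unfolding T1_def using \<theta>1 Tpos by auto
    have \<theta>T1: "\<theta> T1 = \<theta>1" unfolding \<theta>_def T1_def using Tpos by simp
    have aaT1: "aa T1 > M"
    proof -
      have x: "\<theta>1 powr (-\<alpha>) \<ge> ((a0 / (\<bar>M\<bar> + a0)) powr (p - 1)) powr (-\<alpha>)"
        by (rule powr_mono2') (use al \<theta>1 in \<open>auto simp: \<theta>1_def\<close>)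
      have "((a0 / (\<bar>M\<bar> + a0)) powr (p - 1)) powr (-\<alpha>) = (a0 / (\<bar>M\<bar> + a0)) powr (-1)"
        unfolding powr_powr \<alpha>_def using p1 by simp
      also have "\<dots> = (\<bar>M\<bar> + a0) / a0" using a0pos by (simp add: powr_minus_divide)
      finally have "\<theta>1 powr (-\<alpha>) \<ge> (\<bar>M\<bar> + a0) / a0" using x by simp
      then have "a0 * \<theta>1 powr (-\<alpha>) \<ge> \<bar>M\<bar> + a0" using pos_divide_le_eq[OF a0pos] by (simp add: mult.commute)
      then show ?thesis unfolding aa_def \<theta>T1 using a0pos by linarith
    qed
    have \<theta>pos: "\<theta> t \<ge> \<theta>1" "\<theta> t \<le> 1" "\<theta> t > 0" if "t \<in> {0..T1}" for t
    proof -
      show "\<theta> t \<ge> \<theta>1" using that Tpos unfolding \<theta>_def T1_def by (simp add: field_simps)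
      then show "\<theta> t > 0" using \<theta>1 by simp
      show "\<theta> t \<le> 1" using that Tpos unfolding \<theta>_def by simp
    qed
    have vcont: "continuous_on ({0..T1} \<times> UNIV) (\<lambda>z. v (fst z) (snd z))"
    proof -
      have "\<forall>z\<in>{0..T1} \<times> (UNIV::'n heis set). 1 - fst z / T \<noteq> 0" using \<theta>pos(3) unfolding \<theta>_def by force
      then show ?thesis unfolding v_def aa_def bb_def \<theta>_def using Tpos by (intro continuous_intros) auto
    qed
    have ucont1: "continuous_on ({0..T1} \<times> UNIV) (\<lambda>z. u (fst z) (snd z))"
    proof -
      have sub: "{0..T1} \<times> UNIV \<subseteq> {0..T} \<times> (UNIV::'n heis set)" using T1 by auto
      have "continuous_on ({0..T1} \<times> UNIV) (\<lambda>(t, \<eta>). u t \<eta>)" by (rule continuous_on_subset[OF ucont sub])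
      then show ?thesis by (simp add: case_prod_beta')
    qed
    define K where "K = {0..T1} \<times> cball (0::'n heis) 1"
    define S where "S = {z \<in> K. u (fst z) (snd z) \<le> v (fst z) (snd z)}"
    have Kc: "compact K" unfolding K_def by (rule compact_Times[OF compact_Icc compact_cball])
    have Kcl: "closed K" unfolding K_def by (rule closed_Times[OF closed_atLeastAtMost closed_cball])
    have Ksub: "K \<subseteq> {0..T1} \<times> UNIV" unfolding K_def by auto
    have Scl: "closed S" unfolding S_def
      by (rule continuous_on_closed_Collect_le[OF continuous_on_subset[OF ucont1 Ksub] continuous_on_subset[OF vcont Ksub] Kcl])
    have Sc: "compact S"
    proof -
      have "K \<inter> S = S" unfolding S_def by auto
      then show ?thesis using compact_Int_closed[OF Kc Scl] by simp
    qed
    have T1S: "(T1, 0) \<in> S"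
    proof -
      have "u T1 0 \<le> M" using M T1 by simp
      moreover have "v T1 0 = aa T1" unfolding v_def by simp
      ultimately show ?thesis unfolding S_def K_def using aaT1 T1 by simp
    qed
    obtain t0 where t0: "t0 \<in> fst ` S" "\<forall>t\<in>fst ` S. t0 \<le> t"
      using compact_attains_inf[OF compact_continuous_image[OF continuous_on_fst[OF continuous_on_id] Sc]] T1S
      by blast
    then obtain \<eta>0 where \<eta>0S: "(t0, \<eta>0) \<in> S" by force
    have t0K: "0 \<le> t0" "t0 \<le> T1" "norm \<eta>0 \<le> 1" and uv0: "u t0 \<eta>0 \<le> v t0 \<eta>0"
      using \<eta>0S unfolding S_def K_def by auto
    have notS: "(t, \<eta>) \<notin> S" if "t < t0" for t \<eta> using t0(2) that by force
    have t0pos: "t0 > 0"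
    proof (rule ccontr)
      assume "\<not> t0 > 0"
      then have t00: "t0 = 0" using t0K by simp
      have "v 0 \<eta>0 \<le> a0"
      proof -
        have "\<theta> 0 = 1" unfolding \<theta>_def by simp
        then have "aa 0 = a0" "bb 0 \<ge> 0" unfolding aa_def bb_def using a0pos by auto
        then show ?thesis unfolding v_def by simp
      qed
      moreover have "u 0 \<eta>0 \<ge> a0 + 1"
      proof -
        have "u 0 \<eta>0 = A * w \<eta>0" using uinit by blast
        then show ?thesis using Aw[of \<eta>0] t0K by simp
      qed
      ultimately show False using uv0 t00 by simp
    qed
    have vle: "v t0 \<eta> \<le> u t0 \<eta>" for \<eta>
    proof (cases "norm \<eta> \<le> 1")
      case False
      have th: "0 < \<theta> t0" "\<theta> t0 \<le> 1" using \<theta>pos[of t0] t0K by auto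
      have "\<theta> t0 powr (-\<alpha>) \<le> \<theta> t0 powr (-\<alpha>-\<gamma>)"
        using powr_mono'[of "-\<alpha>-\<gamma>" "-\<alpha>" "\<theta> t0"] th al by simp
      then have ab: "aa t0 \<le> bb t0" unfolding aa_def bb_def using a0pos by simp
      have bpos: "bb t0 > 0" unfolding bb_def using a0pos th by simp
      have "(norm \<eta>)^2 > 1" using False by (simp add: one_less_power)
      then have "bb t0 * (norm \<eta>)^2 > bb t0 * 1" using bpos by (simp only: mult_strict_left_mono)
      then have "v t0 \<eta> < 0" unfolding v_def using ab by simp
      moreover have "u t0 \<eta> > 0" using upos t0K by blast
      ultimately show ?thesis by simp
    next
      case True
      show ?thesis
      proof (rule ccontr)
        assume neg: "\<not> v t0 \<eta> \<le> u t0 \<eta>"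
        define g where "g = (\<lambda>t. v t \<eta> - u t \<eta>)"
        have gc: "continuous_on {0..T1} g"
        proof -
          have l: "continuous_on {0..T1} (\<lambda>t. (t, \<eta>))" by (intro continuous_intros)
          have a: "continuous_on {0..T1} (\<lambda>t. (\<lambda>z. v (fst z) (snd z)) (t, \<eta>))"
            by (rule continuous_on_compose2[OF vcont l]) auto
          have b: "continuous_on {0..T1} (\<lambda>t. (\<lambda>z. u (fst z) (snd z)) (t, \<eta>))"
            by (rule continuous_on_compose2[OF ucont1 l]) auto
          show ?thesis unfolding g_def using continuous_on_diff[OF a b] by simp
        qed
        have g0: "g t0 > 0" unfolding g_def using neg by simp
        obtain d where d: "d > 0" "\<forall>t'\<in>{0..T1}. dist t' t0 < d \<longrightarrow> dist (g t') (g t0) < g t0"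
          using gc t0K g0 unfolding continuous_on_iff by (meson atLeastAtMost_iff)
        define t' where "t' = max 0 (t0 - d/2)"
        have t': "t' \<in> {0..T1}" "t' < t0" "dist t' t0 < d" unfolding t'_def using d t0pos t0K
          by (auto simp: dist_real_def)
        then have "\<bar>g t' - g t0\<bar> < g t0" using d(2) by (simp add: dist_real_def)
        then have "g t' > 0" by linarith
        then have "(t', \<eta>) \<in> S" unfolding S_def K_def g_def using t' True by auto
        then show False using notS[OF t'(2)] by simp
      qed
    qed
    have veq: "v t0 \<eta>0 = u t0 \<eta>0" using vle[of \<eta>0] uv0 by simp
    have t0T: "t0 \<in> {0<..T}" using t0pos t0K T1 by simp
    have th0: "0 < \<theta> t0" "\<theta> t0 \<le> 1" using \<theta>pos[of t0] t0K by auto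
    define V where "V = v t0 \<eta>0"
    have Vpos: "V > 0" unfolding V_def veq using upos t0K by blast
    define vt where "vt = a0 * \<alpha> * \<theta> t0 powr (-\<alpha>-1) / T - a0 * (\<alpha> + \<gamma>) * \<theta> t0 powr (-\<alpha>-\<gamma>-1) * (norm \<eta>0)^2 / T"
    have dv: "((\<lambda>t. v t \<eta>0) has_real_derivative vt) (at t0)"
    proof -
      have d1: "((\<lambda>t. (1 - t / T) powr (-\<alpha>)) has_real_derivative ((-\<alpha>) * (1 - t0 / T) powr ((-\<alpha>) - 1) * (- 1 / T))) (at t0)"
        by (rule powr_deriv_aux) (use Tpos th0 in \<open>auto simp: \<theta>_def\<close>)
      have d2: "((\<lambda>t. (1 - t / T) powr (-\<alpha>-\<gamma>)) has_real_derivative ((-\<alpha>-\<gamma>) * (1 - t0 / T) powr ((-\<alpha>-\<gamma>) - 1) * (- 1 / T))) (at t0)"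
        by (rule powr_deriv_aux) (use Tpos th0 in \<open>auto simp: \<theta>_def\<close>)
      have "((\<lambda>t. a0 * (1 - t / T) powr (-\<alpha>) - a0 * (1 - t / T) powr (-\<alpha>-\<gamma>) * (norm \<eta>0)^2) has_real_derivative
          a0 * ((-\<alpha>) * (1 - t0 / T) powr ((-\<alpha>) - 1) * (- 1 / T)) - a0 * ((-\<alpha>-\<gamma>) * (1 - t0 / T) powr ((-\<alpha>-\<gamma>) - 1) * (- 1 / T)) * (norm \<eta>0)^2) (at t0)"
        by (intro DERIV_diff DERIV_cmult DERIV_cmult_right d1 d2) 
      moreover have "a0 * ((-\<alpha>) * (1 - t0 / T) powr ((-\<alpha>) - 1) * (- 1 / T)) - a0 * ((-\<alpha>-\<gamma>) * (1 - t0 / T) powr ((-\<alpha>-\<gamma>) - 1) * (- 1 / T)) * (norm \<eta>0)^2 = vt"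
        unfolding vt_def \<theta>_def by (simp add: algebra_simps add_divide_distrib)
      ultimately show ?thesis unfolding v_def aa_def bb_def \<theta>_def by simp
    qed
    have vt_ge: "vt \<ge> ut t0 \<eta>0"
    proof (rule ccontr)
      assume "\<not> vt \<ge> ut t0 \<eta>0"
      then have lt: "vt - ut t0 \<eta>0 < 0" by simp
      have du: "((\<lambda>t. u t \<eta>0) has_real_derivative ut t0 \<eta>0) (at t0)"
      proof -
        have "t0 \<in> interior {0..T}" using t0pos t0K T1 by simp
        then show ?thesis using hut'[OF t0T, of \<eta>0] at_within_interior by metis
      qed
      obtain d where d: "d > 0" "\<forall>h>0. h < d \<longrightarrow> (\<lambda>t. v t \<eta>0 - u t \<eta>0) t0 < (\<lambda>t. v t \<eta>0 - u t \<eta>0) (t0 - h)"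
        using DERIV_neg_dec_left[OF DERIV_diff[OF dv du] lt] by blast
      define h where "h = min (d/2) t0"
      have h: "h > 0" "h < d" "h \<le> t0" unfolding h_def using d t0pos by auto
      then have "v t0 \<eta>0 - u t0 \<eta>0 < v (t0 - h) \<eta>0 - u (t0 - h) \<eta>0" using d(2) by simp
      then have "(t0 - h, \<eta>0) \<in> S" unfolding S_def K_def using veq h t0K by auto
      then show False using notS[of "t0 - h"] h by simp
    qed
    define F where "F = (\<lambda>\<eta>. v t0 \<eta> - u t0 \<eta>)"
    define Gf where "Gf = (\<lambda>b \<eta>. - (bb t0 * (2 * (\<eta> \<bullet> b))) - D1 b t0 \<eta>)"
    define Hf where "Hf = (\<lambda>c b \<eta>. - (bb t0 * (2 * (c \<bullet> b))) - D2 c b t0 \<eta>)"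
    have Fmax: "F \<xi> \<le> F \<eta>0" for \<xi> unfolding F_def using vle[of \<xi>] veq by simp
    have dF: "((\<lambda>s. F (\<xi> + s *\<^sub>R b)) has_real_derivative Gf b \<xi>) (at 0)" if "b \<in> Basis" for b \<xi>
    proof -
      have "((\<lambda>s. aa t0 - bb t0 * (norm (\<xi> + s *\<^sub>R b))^2 - u t0 (\<xi> + s *\<^sub>R b)) has_real_derivative
              0 - bb t0 * (2 * (\<xi> \<bullet> b)) - D1 b t0 \<xi>) (at 0)"
        by (intro DERIV_diff DERIV_const DERIV_cmult norm_sq_deriv hD1'[OF that t0T])
      then show ?thesis unfolding F_def v_def Gf_def by simp
    qed
    have dG: "((\<lambda>s. Gf b (\<xi> + s *\<^sub>R c)) has_real_derivative Hf c b \<xi>) (at 0)"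
      if "b \<in> Basis" "c \<in> Basis" for b c \<xi>
    proof -
      have e: "(\<lambda>s. (\<xi> + s *\<^sub>R c) \<bullet> b) = (\<lambda>s. \<xi> \<bullet> b + s * (c \<bullet> b))"
        by (auto simp: inner_add_left)
      have di: "((\<lambda>s. (\<xi> + s *\<^sub>R c) \<bullet> b) has_real_derivative c \<bullet> b) (at 0)"
        unfolding e by (auto intro!: derivative_eq_intros)
      have "((\<lambda>s. - (bb t0 * (2 * ((\<xi> + s *\<^sub>R c) \<bullet> b))) - D1 b t0 (\<xi> + s *\<^sub>R c)) has_real_derivative
              - (bb t0 * (2 * (c \<bullet> b))) - D2 c b t0 \<xi>) (at 0)"
        by (intro DERIV_diff DERIV_minus DERIV_cmult di hD2'[OF that(2,1) t0T])
      then show ?thesis unfolding Gf_def Hf_def by simp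
    qed
    have ct: "continuous_on UNIV (\<lambda>\<eta>::'n heis. f (t0, \<eta>))" if "continuous_on ({0<..T} \<times> UNIV) f" for f :: "_ \<Rightarrow> real"
      by (rule continuous_on_compose2[OF that]) (use t0T in \<open>auto intro!: continuous_intros\<close>)
    have cG: "continuous_on UNIV (Gf b)" if "b \<in> Basis" for b
    proof -
      have c1: "continuous_on UNIV (\<lambda>\<eta>. D1 b t0 \<eta>)" using ct[OF cD1[rule_format, OF that]] by simp
      have c2: "continuous_on UNIV (\<lambda>\<eta>::'n heis. - (bb t0 * (2 * (\<eta> \<bullet> b))))" by (intro continuous_intros)
      show ?thesis unfolding Gf_def by (rule continuous_on_diff[OF c2 c1])
    qed
    have cH: "continuous_on UNIV (Hf c b)" if "b \<in> Basis" "c \<in> Basis" for b c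
    proof -
      have c1: "continuous_on UNIV (\<lambda>\<eta>. D2 c b t0 \<eta>)" using ct[OF cD2[rule_format, OF that(2,1)]] by simp
      have c2: "continuous_on UNIV (\<lambda>\<eta>::'n heis. - (bb t0 * (2 * (c \<bullet> b))))" by (intro continuous_intros)
      show ?thesis unfolding Hf_def by (rule continuous_on_diff[OF c2 c1])
    qed
    have Qle: "Qf Hf b1 b2 k \<eta>0 \<le> 0" if "b1 \<in> Basis" "b2 \<in> Basis" for b1 b2 k
      unfolding Qf_def
      by (rule max2[OF Fmax dF[OF that(1)] dF[OF that(2)] cG[OF that(2)] dG[OF that(1,1)] dG[OF that(1,2)]
            cH[OF that(1,2)] dG[OF that(2,1)] dG[OF that(2,2)] cH[OF that(2,2)]])
    define Hu where "Hu = (\<lambda>c b. D2 c b t0)"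
    have Qorth: "Qf Hf b1 b2 k \<eta>0 = - 2 * bb t0 * (1 + k^2) - Qf Hu b1 b2 k \<eta>0"
      if "b1 \<in> Basis" "b2 \<in> Basis" "b1 \<noteq> b2" for b1 b2 k
    proof -
      have "b1 \<bullet> b1 = 1" "b2 \<bullet> b2 = 1" "b1 \<bullet> b2 = 0" "b2 \<bullet> b1 = 0"
        using that by (auto simp: inner_Basis)
      then show ?thesis unfolding Qf_def Hf_def Hu_def by (simp add: algebra_simps power2_eq_square)
    qed
    have QX: "Qf Hu b1 b2 k \<eta>0 \<ge> - 2 * bb t0 * (1 + k^2)"
      if "b1 \<in> Basis" "b2 \<in> Basis" "b1 \<noteq> b2" for b1 b2 k
      using Qle[OF that(1,2), of k] Qorth[OF that, of k] by simp
    obtain x y \<tau> where \<eta>0eq: "\<eta>0 = (x, y, \<tau>)" by (cases \<eta>0) auto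
    have lap: "heis_lap (u t0) \<eta>0 = (\<Sum>i\<in>UNIV. Qf Hu (axis i 1, 0, 0) (0, 0, 1) (-2 * (y $ i)) \<eta>0
             + Qf Hu (0, axis i 1, 0) (0, 0, 1) (2 * (x $ i)) \<eta>0)"
    proof -
      have "heis_lap (u t0) \<eta>0 = (\<Sum>i\<in>UNIV. Qf (\<lambda>b c. D2 b c t0) (axis i 1, 0, 0) (0, 0, 1) (-2 * (fst (snd \<eta>0) $ i)) \<eta>0
             + Qf (\<lambda>b c. D2 b c t0) (0, axis i 1, 0) (0, 0, 1) (2 * (fst \<eta>0 $ i)) \<eta>0)"
        by (rule heis_lap_eq) (auto intro: hD1'[OF _ t0T] hD2'[OF _ _ t0T])
      then show ?thesis unfolding Hu_def \<eta>0eq by simp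
    qed
    have neqx: "((axis i 1, 0, 0)::'n heis) \<noteq> (0, 0, 1)" for i by simp
    have neqy: "((0, axis i 1, 0)::'n heis) \<noteq> (0, 0, 1)" for i by simp
    have lapge: "heis_lap (u t0) \<eta>0 \<ge> (\<Sum>i\<in>UNIV. - 2 * bb t0 * (1 + (-2 * (y $ i))^2) + - 2 * bb t0 * (1 + (2 * (x $ i))^2))"
      unfolding lap by (intro sum_mono add_mono QX basis_x basis_y basis_t neqx neqy)
    have sumeq: "(\<Sum>i\<in>UNIV. - 2 * bb t0 * (1 + (-2 * (y $ i))^2) + - 2 * bb t0 * (1 + (2 * (x $ i))^2))
        = - 4 * bb t0 * nn - 8 * bb t0 * ((\<Sum>i\<in>UNIV. (x $ i)^2) + (\<Sum>i\<in>UNIV. (y $ i)^2))"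
    proof -
      have "(\<Sum>i\<in>UNIV. - 2 * bb t0 * (1 + (-2 * (y $ i))^2) + - 2 * bb t0 * (1 + (2 * (x $ i))^2))
          = (\<Sum>i\<in>UNIV. - 4 * bb t0 - (8 * bb t0) * (x $ i)^2 - (8 * bb t0) * (y $ i)^2)"
        by (rule sum.cong) (simp_all add: power2_eq_square algebra_simps)
      also have "\<dots> = (\<Sum>i\<in>(UNIV::'n set). - 4 * bb t0) - (8 * bb t0) * (\<Sum>i\<in>UNIV. (x $ i)^2) - (8 * bb t0) * (\<Sum>i\<in>UNIV. (y $ i)^2)"
        by (simp only: sum_subtractf sum_distrib_left)
      also have "(\<Sum>i\<in>(UNIV::'n set). - 4 * bb t0) = - 4 * bb t0 * nn" unfolding nn_def by simp
      finally show ?thesis by (simp add: algebra_simps)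
    qed
    have nxy: "(\<Sum>i\<in>UNIV. (x $ i)^2) + (\<Sum>i\<in>UNIV. (y $ i)^2) \<le> 1"
    proof -
      have "(norm \<eta>0)^2 \<le> 1" using t0K by (simp add: power_le_one)
      moreover have "\<tau>^2 \<ge> 0" by simp
      ultimately show ?thesis unfolding sum_sq_vec \<eta>0eq norm_heis_sq by linarith
    qed
    have bbpos: "bb t0 > 0" unfolding bb_def using a0pos th0 by simp
    have Lge: "heis_lap (u t0) \<eta>0 \<ge> - 2 * bb t0 * (2 * nn + 4)"
    proof -
      have "8 * bb t0 * ((\<Sum>i\<in>UNIV. (x $ i)^2) + (\<Sum>i\<in>UNIV. (y $ i)^2)) \<le> 8 * bb t0 * 1"
        using nxy bbpos by (intro mult_left_mono) auto
      then show ?thesis using lapge sumeq by (simp add: algebra_simps)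
    qed
    have utv: "ut t0 \<eta>0 = V powr q * heis_lap (u t0) \<eta>0 + V powr p"
      using heq'[OF t0T, of \<eta>0] unfolding V_def veq by simp
    have "V powr q * heis_lap (u t0) \<eta>0 \<ge> V powr q * (- 2 * bb t0 * (2 * nn + 4))"
      using Lge Vpos by (intro mult_left_mono) auto
    then have ge: "vt + 2 * bb t0 * (2 * nn + 4) * V powr q - V powr p \<ge> 0"
      using vt_ge utv by (simp add: algebra_simps)
    have lt: "vt + 2 * bb t0 * (2 * nn + 4) * V powr q - V powr p < 0"
    proof -
      have Veq: "V = a0 * \<theta> t0 powr (-\<alpha>) - a0 * \<theta> t0 powr (-\<alpha>-\<gamma>) * (norm \<eta>0)^2"
        unfolding V_def v_def aa_def bb_def by simp
      have "a0 * \<alpha> * \<theta> t0 powr (-\<alpha>-1) / T - a0 * (\<alpha> + \<gamma>) * \<theta> t0 powr (-\<alpha>-\<gamma>-1) * (norm \<eta>0)^2 / T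
        + 2 * (a0 * \<theta> t0 powr (-\<alpha>-\<gamma>)) * (2 * nn + 4) * (a0 * \<theta> t0 powr (-\<alpha>) - a0 * \<theta> t0 powr (-\<alpha>-\<gamma>) * (norm \<eta>0)^2) powr q
        - (a0 * \<theta> t0 powr (-\<alpha>) - a0 * \<theta> t0 powr (-\<alpha>-\<gamma>) * (norm \<eta>0)^2) powr p < 0"
        by (rule scalar_ineq[OF hq hpq nn0 \<alpha>_def \<gamma>_def \<epsilon>_def \<mu>_def Kc_def a0_def T_def th0])
           (use Vpos Veq in auto)
      then show ?thesis unfolding vt_def Veq[symmetric] bb_def by simp
    qed
    show False using ge lt by simp
  qed
qed

end
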